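(* Let $\imath:V\hookrightarrow U$ be an inclusion of regular molecules such that $n:=\dim U=\dim V$ and $V$ is round. If $\imath$ is a submolecule inclusion, then $\mathcal F_{n-1}V$ (identified with the induced subgraph of $\mathcal F_{n-1}U$ on the image of $\imath$) is a path-induced subgraph of $\mathcal F_{n-1}U$.
   Context: All posets are finite; $y$ covers $x$ if $x<y$ with nothing strictly between. A finite poset is graded if for each $x$ all maximal covering chains descending from $x$ have the same length $\dim x$; $U_n$ denotes elements of dimension $n$. An oriented graded poset is a finite graded poset with a label $\pm$ on each covering pair; $\Delta^\alpha x$ ($\nabla^\alpha x$) is the set of elements covered by (covering) $x$ with label $\alpha$. For closed (downward closed) $U$, with $\mathrm{cl}$ downward closure, $\max U$ maximal elements, $\dim U$ maximal dimension: $\Delta^\alpha_nU=\{x\in U_n:\nabla^{-\alpha}x\cap U=\emptyset\}$, $\partial^\alpha_nU=\mathrm{cl}(\Delta^\alpha_nU)\cup\bigcup_{k<n}\mathrm{cl}((\max U)_k)$ ($\emptyset$ for $n<0$), $\partial_nU=\partial^-_nU\cup\partial^+_nU$, subscript omitted for $n=\dim U-1$; $\Delta^\alpha_kx:=\Delta^\alpha_k\mathrm{cl}\{x\}$. Maps are functions with $f(\partial^\alpha_n\mathrm{cl}\{x\})=\partial^\alpha_n\mathrm{cl}\{f(x)\}$; inclusions are injective maps. $U\#_kV$ is the pushout of $U\hookleftarrow\partial^+_kU\cong\partial^-_kV\hookrightarrow V$; for $U,V$ of equal dimension $n$ with $\partial U\cong\partial V$ compatibly with $\partial^\pm$, $U\Rightarrow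 V$ is that pushout with a new element $\top$ of dimension $n+1$, $\Delta^-\top=U_n$, $\Delta^+\top=V_n$. $U$ is round if $\partial^-_nU\cap\partial^+_nU=\partial_{n-1}U$ for all $n<\dim U$. Regular molecules: smallest isomorphism-closed class containing the point, closed under $U\#_kV$ ($k<\min(\dim U,\dim V)$) and $U\Rightarrow V$ for round regular molecules of equal dimension. Submolecule inclusions: smallest class of inclusions of regular molecules containing isomorphisms and $U\hookrightarrow U\#_kV\hookleftarrow V$, closed under composition. $\mathcal F_kU$: directed graph with vertices $\bigcup_{i>k}U_i$ and edge $x\to y$ iff $\Delta^+_kx\cap\Delta^-_ky\ne\emptyset$. For a directed graph $\mathcal G$ and vertex subset $W$, the induced subgraph on $W$ is path-induced if for all $x,y\in W$ every path from $x$ to $y$ in $\mathcal G$ lies in the induced subgraph. *)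

theory Defs
  imports Main
begin

text \<open>Fc P a x is the set of elements covered by x with label a
  (True = +, False = -). The partial order is the reflexive transitive closure
  of the covering relation.\<close>

record ogp =
  El :: "nat set"
  Fc :: "bool \<Rightarrow> nat \<Rightarrow> nat set"

definition cov :: "ogp \<Rightarrow> (nat \<times> nat) set" where
  "cov P = {(y, x). x \<in> El P \<and> (\<exists>a. y \<in> Fc P a x)}"

definition le :: "ogp \<Rightarrow> nat \<Rightarrow> nat \<Rightarrow> bool" where
  "le P y x \<longleftrightarrow> x \<in> El P \<and> (y, x) \<in> (cov P)\<^sup>*"

definition maxchain :: "ogp \<Rightarrow> nat \<Rightarrow> nat list \<Rightarrow> bool" where
  "maxchain P x cs \<longleftrightarrow> cs \<noteq> [] \<and> hd cs = x \<and>
     (\<forall>i. Suc i < length cs \<longrightarrow> (cs ! Suc i, cs ! i) \<in> cov P) \<and>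
     (\<forall>y. (y, last cs) \<notin> cov P)"

definition ogpos :: "ogp \<Rightarrow> bool" where
  "ogpos P \<longleftrightarrow> finite (El P) \<and>
     (\<forall>a x. Fc P a x \<subseteq> El P) \<and>
     (\<forall>a x. x \<notin> El P \<longrightarrow> Fc P a x = {}) \<and>
     (\<forall>x. Fc P True x \<inter> Fc P False x = {}) \<and>
     acyclic (cov P) \<and>
     (\<forall>y x z. (y, x) \<in> cov P \<longrightarrow> \<not> ((y, z) \<in> (cov P)\<^sup>+ \<and> (z, x) \<in> (cov P)\<^sup>+)) \<and>
     (\<forall>x\<in>El P. \<forall>c1 c2. maxchain P x c1 \<longrightarrow> maxchain P x c2 \<longrightarrow> length c1 = length c2)"

definition dim :: "ogp \<Rightarrow> nat \<Rightarrow> nat" where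
  "dim P x = length (SOME c. maxchain P x c) - 1"

definition dimS :: "ogp \<Rightarrow> nat set \<Rightarrow> int" where
  "dimS P A = (if A = {} then -1 else int (Max (dim P ` A)))"

definition grade :: "ogp \<Rightarrow> nat set \<Rightarrow> nat \<Rightarrow> nat set" where
  "grade P A n = {x \<in> A. dim P x = n}"

definition cl :: "ogp \<Rightarrow> nat set \<Rightarrow> nat set" where
  "cl P A = {y. \<exists>x\<in>A. le P y x}"

definition maxs :: "ogp \<Rightarrow> nat set \<Rightarrow> nat set" where
  "maxs P A = {x \<in> A. \<forall>y\<in>A. le P x y \<longrightarrow> y = x}"

definition nabla :: "ogp \<Rightarrow> bool \<Rightarrow> nat \<Rightarrow> nat set" where
  "nabla P a x = {y \<in> El P. x \<in> Fc P a y}"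

definition DeltaS :: "ogp \<Rightarrow> bool \<Rightarrow> nat \<Rightarrow> nat set \<Rightarrow> nat set" where
  "DeltaS P a n U = {x \<in> U. dim P x = n \<and> nabla P (\<not> a) x \<inter> U = {}}"

definition bd :: "ogp \<Rightarrow> bool \<Rightarrow> int \<Rightarrow> nat set \<Rightarrow> nat set" where
  "bd P a n U = (if n < 0 then {} else
     cl P (DeltaS P a (nat n) U) \<union> (\<Union>k<nat n. cl P (grade P (maxs P U) k)))"

definition bd2 :: "ogp \<Rightarrow> int \<Rightarrow> nat set \<Rightarrow> nat set" where
  "bd2 P n U = bd P False n U \<union> bd P True n U"

definition sub :: "ogp \<Rightarrow> nat set \<Rightarrow> ogp" where
  "sub P A = \<lparr>El = A, Fc = (\<lambda>a x. if x \<in> A then Fc P a x \<inter> A else {})\<rparr>"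

definition ismap :: "(nat \<Rightarrow> nat) \<Rightarrow> ogp \<Rightarrow> ogp \<Rightarrow> bool" where
  "ismap f P Q \<longleftrightarrow> (\<forall>x\<in>El P. f x \<in> El Q) \<and>
     (\<forall>x\<in>El P. \<forall>a (n::nat). f ` bd P a (int n) (cl P {x}) = bd Q a (int n) (cl Q {f x}))"

definition incl :: "(nat \<Rightarrow> nat) \<Rightarrow> ogp \<Rightarrow> ogp \<Rightarrow> bool" where
  "incl f P Q \<longleftrightarrow> ismap f P Q \<and> inj_on f (El P)"

definition iso :: "(nat \<Rightarrow> nat) \<Rightarrow> ogp \<Rightarrow> ogp \<Rightarrow> bool" where
  "iso f P Q \<longleftrightarrow> ismap f P Q \<and> bij_betw f (El P) (El Q) \<and> ismap (inv_into (El P) f) Q P"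

definition round :: "ogp \<Rightarrow> bool" where
  "round U \<longleftrightarrow> (\<forall>n::nat. int n < dimS U (El U) \<longrightarrow>
     bd U False (int n) (El U) \<inter> bd U True (int n) (El U) = bd2 U (int n - 1) (El U))"

section \<open>Pasting and atoms (characterised as pushout cocones, up to isomorphism)\<close>

text \<open>W together with iU, iV is the pushout U #_k V of
  U <- \<partial>^+_k U \<cong> \<partial>^-_k V -> V\<close>
definition is_paste :: "ogp \<Rightarrow> ogp \<Rightarrow> nat \<Rightarrow> ogp \<Rightarrow> (nat \<Rightarrow> nat) \<Rightarrow> (nat \<Rightarrow> nat) \<Rightarrow> bool" where
  "is_paste U V k W iU iV \<longleftrightarrow>
     (\<exists>\<phi>. iso \<phi> (sub U (bd U True (int k) (El U))) (sub V (bd V False (int k) (El V))) \<and>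
       inj_on iU (El U) \<and> inj_on iV (El V) \<and>
       El W = iU ` El U \<union> iV ` El V \<and>
       (\<forall>x\<in>El U. \<forall>y\<in>El V. iU x = iV y \<longleftrightarrow> (x \<in> bd U True (int k) (El U) \<and> y = \<phi> x)) \<and>
       (\<forall>x\<in>El U. \<forall>a. Fc W a (iU x) = iU ` Fc U a x) \<and>
       (\<forall>y\<in>El V. \<forall>a. Fc W a (iV y) = iV ` Fc V a y))"

text \<open>W together with iU, iV and the new top element t is U \<Rightarrow> V, n = dim U = dim V\<close>
definition is_atom :: "ogp \<Rightarrow> ogp \<Rightarrow> nat \<Rightarrow> ogp \<Rightarrow> (nat \<Rightarrow> nat) \<Rightarrow> (nat \<Rightarrow> nat) \<Rightarrow> nat \<Rightarrow> bool" where
  "is_atom U V n W iU iV t \<longleftrightarrow>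
     dimS U (El U) = int n \<and> dimS V (El V) = int n \<and>
     (\<exists>\<psi>. iso \<psi> (sub U (bd2 U (int n - 1) (El U))) (sub V (bd2 V (int n - 1) (El V))) \<and>
       (\<forall>a. \<psi> ` bd U a (int n - 1) (El U) = bd V a (int n - 1) (El V)) \<and>
       inj_on iU (El U) \<and> inj_on iV (El V) \<and>
       t \<notin> iU ` El U \<union> iV ` El V \<and>
       El W = iU ` El U \<union> iV ` El V \<union> {t} \<and>
       (\<forall>x\<in>El U. \<forall>y\<in>El V. iU x = iV y \<longleftrightarrow> (x \<in> bd2 U (int n - 1) (El U) \<and> y = \<psi> x)) \<and>
       (\<forall>x\<in>El U. \<forall>a. Fc W a (iU x) = iU ` Fc U a x) \<and>
       (\<forall>y\<in>El V. \<forall>a. Fc W a (iV y) = iV ` Fc V a y) \<and>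
       Fc W False t = iU ` grade U (El U) n \<and>
       Fc W True t = iV ` grade V (El V) n)"

inductive regmol :: "ogp \<Rightarrow> bool" where
  point: "ogpos P \<Longrightarrow> El P = {p} \<Longrightarrow> regmol P"
| isocl: "regmol U \<Longrightarrow> ogpos W \<Longrightarrow> iso f U W \<Longrightarrow> regmol W"
| paste: "regmol U \<Longrightarrow> regmol V \<Longrightarrow> int k < dimS U (El U) \<Longrightarrow> int k < dimS V (El V) \<Longrightarrow>
          ogpos W \<Longrightarrow> is_paste U V k W iU iV \<Longrightarrow> regmol W"
| atom: "regmol U \<Longrightarrow> regmol V \<Longrightarrow> round U \<Longrightarrow> round V \<Longrightarrow>
          ogpos W \<Longrightarrow> is_atom U V n W iU iV t \<Longrightarrow> regmol W"

inductive subinc :: "(nat \<Rightarrow> nat) \<Rightarrow> ogp \<Rightarrow> ogp \<Rightarrow> bool" where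
  iso: "regmol U \<Longrightarrow> regmol V \<Longrightarrow> iso f U V \<Longrightarrow> subinc f U V"
| inl: "regmol U \<Longrightarrow> regmol V \<Longrightarrow> int k < dimS U (El U) \<Longrightarrow> int k < dimS V (El V) \<Longrightarrow>
          ogpos W \<Longrightarrow> is_paste U V k W iU iV \<Longrightarrow> subinc iU U W"
| inr: "regmol U \<Longrightarrow> regmol V \<Longrightarrow> int k < dimS U (El U) \<Longrightarrow> int k < dimS V (El V) \<Longrightarrow>
          ogpos W \<Longrightarrow> is_paste U V k W iU iV \<Longrightarrow> subinc iV V W"
| comp: "subinc f A B \<Longrightarrow> subinc g B C \<Longrightarrow> subinc (g \<circ> f) A C"
| ext: "subinc f A B \<Longrightarrow> (\<forall>x\<in>El A. f x = g x) \<Longrightarrow> subinc g A B"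

definition DeltaK :: "ogp \<Rightarrow> bool \<Rightarrow> int \<Rightarrow> nat \<Rightarrow> nat set" where
  "DeltaK P a k x = (if k < 0 then {} else DeltaS P a (nat k) (cl P {x}))"

definition fvert :: "ogp \<Rightarrow> int \<Rightarrow> nat set" where
  "fvert U k = {x \<in> El U. int (dim U x) > k}"

definition fedge :: "ogp \<Rightarrow> int \<Rightarrow> nat \<Rightarrow> nat \<Rightarrow> bool" where
  "fedge U k x y \<longleftrightarrow> x \<in> fvert U k \<and> y \<in> fvert U k \<and>
     DeltaK U True k x \<inter> DeltaK U False k y \<noteq> {}"

definition fpath :: "ogp \<Rightarrow> int \<Rightarrow> nat list \<Rightarrow> bool" where
  "fpath U k xs \<longleftrightarrow> xs \<noteq> [] \<and> set xs \<subseteq> fvert U k \<and>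
     (\<forall>i. Suc i < length xs \<longrightarrow> fedge U k (xs ! i) (xs ! Suc i))"

definition path_induced :: "ogp \<Rightarrow> int \<Rightarrow> nat set \<Rightarrow> bool" where
  "path_induced U k W \<longleftrightarrow> W \<subseteq> fvert U k \<and>
     (\<forall>xs. fpath U k xs \<longrightarrow> hd xs \<in> W \<longrightarrow> last xs \<in> W \<longrightarrow> set xs \<subseteq> W)"

end

theory Submission
  imports Defs
begin


lemma cov_El: "ogpos P \<Longrightarrow> (y,x) \<in> cov P \<Longrightarrow> x \<in> El P \<and> y \<in> El P"
  unfolding cov_def ogpos_def by blast

lemma wf_cov: "ogpos P \<Longrightarrow> wf (cov P)"
proof -
  assume o: "ogpos P"
  have "cov P \<subseteq> El P \<times> El P" using cov_El[OF o] by auto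
  then have "finite (cov P)" using o unfolding ogpos_def by (meson finite_SigmaI finite_subset)
  then show ?thesis using finite_acyclic_wf o unfolding ogpos_def by blast
qed

lemma maxchain_Cons: "maxchain P y c \<Longrightarrow> (y,x) \<in> cov P \<Longrightarrow> maxchain P x (x # c)"
  unfolding maxchain_def
  apply (intro conjI allI impI)
  apply simp
  apply simp
  subgoal for i by (cases i) (auto simp: hd_conv_nth)
  apply auto
  done

lemma maxchain_ex: assumes o: "ogpos P" shows "\<exists>c. maxchain P x c"
proof (rule wf_induct_rule[OF wf_cov[OF o]])
  fix x assume less: "\<And>y. (y,x) \<in> cov P \<Longrightarrow> \<exists>c. maxchain P y c"
  show "\<exists>c. maxchain P x c"
  proof (cases "\<exists>y. (y,x) \<in> cov P")
    case False
    then have "maxchain P x [x]" unfolding maxchain_def by auto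
    then show ?thesis by blast
  next
    case True
    then obtain y where y: "(y,x) \<in> cov P" by blast
    then obtain c where c: "maxchain P y c" using less by blast
    show ?thesis using maxchain_Cons[OF c y] by blast
  qed
qed

lemma dim_maxchain: "ogpos P \<Longrightarrow> x \<in> El P \<Longrightarrow> maxchain P x c \<Longrightarrow> dim P x = length c - 1"
proof -
  assume o: "ogpos P" and x: "x \<in> El P" and c: "maxchain P x c"
  have "maxchain P x (SOME c. maxchain P x c)" using c by (rule someI)
  then show ?thesis using o x c unfolding dim_def ogpos_def by metis
qed

lemma dim_cov: "ogpos P \<Longrightarrow> (y,x) \<in> cov P \<Longrightarrow> dim P x = Suc (dim P y)"
proof -
  assume o: "ogpos P" and y: "(y,x) \<in> cov P"
  obtain c where c: "maxchain P y c" using maxchain_ex[OF o] by blast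
  have "maxchain P x (x # c)" using maxchain_Cons[OF c y] .
  then have "dim P x = length c" using dim_maxchain[OF o] cov_El[OF o y] by force
  moreover have "dim P y = length c - 1" using dim_maxchain[OF o _ c] cov_El[OF o y] by blast
  moreover have "c \<noteq> []" using c unfolding maxchain_def by auto
  ultimately show ?thesis by (cases c) auto
qed

lemma trancl_dim: assumes o: "ogpos P" and t: "(y,x) \<in> (cov P)\<^sup>+" shows "dim P y < dim P x"
  using t
proof (induction rule: trancl_induct)
  case (base z) then show ?case using dim_cov[OF o] by simp
next
  case (step z w) then show ?case using dim_cov[OF o, of z w] by simp
qed

lemma le_dim: "ogpos P \<Longrightarrow> le P y x \<Longrightarrow> dim P y \<le> dim P x"
  unfolding le_def using trancl_dim by (metis eq_iff less_imp_le rtrancl_eq_or_trancl)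

lemma le_dim_less: "ogpos P \<Longrightarrow> le P y x \<Longrightarrow> y \<noteq> x \<Longrightarrow> dim P y < dim P x"
  unfolding le_def using trancl_dim by (metis rtrancl_eq_or_trancl)

lemma le_eqdim: "ogpos P \<Longrightarrow> le P y x \<Longrightarrow> dim P y = dim P x \<Longrightarrow> y = x"
  using le_dim_less by fastforce

lemma le_El: "ogpos P \<Longrightarrow> le P y x \<Longrightarrow> y \<in> El P"
  unfolding le_def by (metis cov_El rtrancl_eq_or_trancl tranclD)

lemma le_refl: "x \<in> El P \<Longrightarrow> le P x x" unfolding le_def by simp

lemma le_trans: "le P z y \<Longrightarrow> le P y x \<Longrightarrow> le P z x" unfolding le_def by auto

lemma cov_le: "(y,x) \<in> cov P \<Longrightarrow> le P y x" unfolding le_def cov_def by auto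

lemma le_cover: "ogpos P \<Longrightarrow> le P y x \<Longrightarrow> Suc (dim P y) = dim P x \<Longrightarrow> (y,x) \<in> cov P"
proof -
  assume o: "ogpos P" and l: "le P y x" and d: "Suc (dim P y) = dim P x"
  have "y \<noteq> x" using d by auto
  then have "(y,x) \<in> (cov P)\<^sup>+" using l unfolding le_def by (meson rtranclD)
  then obtain z where z1: "(y,z) \<in> (cov P)\<^sup>*" and z2: "(z,x) \<in> cov P" using tranclD2 by metis
  have "z \<in> El P" using cov_El[OF o z2] by blast
  then have "le P y z" using z1 unfolding le_def by blast
  moreover have "dim P z = dim P y" using dim_cov[OF o z2] d by simp
  ultimately have "y = z" using le_eqdim[OF o] by metis
  then show ?thesis using z2 by simp
qed

lemma cov_Fc: "(y,x) \<in> cov P \<longleftrightarrow> x \<in> El P \<and> (\<exists>a. y \<in> Fc P a x)" unfolding cov_def by auto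

lemma bd_top:
  assumes o: "ogpos P" and A: "A \<subseteq> El P" and z: "z \<in> bd P a (int m) A" and d: "m \<le> dim P z"
  shows "dim P z = m \<and> z \<in> DeltaS P a m A"
proof -
  have "z \<in> cl P (DeltaS P a m A) \<or> (\<exists>k<m. z \<in> cl P (grade P (maxs P A) k))"
    using z unfolding bd_def by auto
  then show ?thesis
  proof
    assume "z \<in> cl P (DeltaS P a m A)"
    then obtain w where w: "w \<in> DeltaS P a m A" "le P z w" unfolding cl_def by blast
    have "dim P w = m" using w unfolding DeltaS_def by auto
    then have "dim P z = m" using le_dim[OF o w(2)] d by simp
    then have "z = w" using le_eqdim[OF o w(2)] \<open>dim P w = m\<close> by simp
    then show ?thesis using w \<open>dim P z = m\<close> by simp
  next
    assume "\<exists>k<m. z \<in> cl P (grade P (maxs P A) k)"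
    then obtain k w where "k < m" "le P z w" "dim P w = k"
      unfolding cl_def grade_def by blast
    then show ?thesis using le_dim[OF o] d by fastforce
  qed
qed

lemma dimS_le: "ogpos P \<Longrightarrow> dimS P (El P) = int n \<Longrightarrow> x \<in> El P \<Longrightarrow> dim P x \<le> n"
  unfolding dimS_def ogpos_def by (auto split: if_splits)

lemma dimS_ex: "ogpos P \<Longrightarrow> dimS P (El P) = int n \<Longrightarrow> \<exists>x\<in>El P. dim P x = n"
proof -
  assume o: "ogpos P" and d: "dimS P (El P) = int n"
  have ne: "El P \<noteq> {}" using d unfolding dimS_def by auto
  have f: "finite (El P)" using o unfolding ogpos_def by auto
  have "Max (dim P ` El P) = n" using d ne unfolding dimS_def by auto
  moreover have "Max (dim P ` El P) \<in> dim P ` El P" using f ne by (intro Max_in) auto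
  ultimately show ?thesis by force
qed

lemma dim_zero: "ogpos P \<Longrightarrow> \<not>(\<exists>y. (y,x) \<in> cov P) \<Longrightarrow> x \<in> El P \<Longrightarrow> dim P x = 0"
proof -
  assume o: "ogpos P" and n: "\<not>(\<exists>y. (y,x) \<in> cov P)" and x: "x \<in> El P"
  have "maxchain P x [x]" using n unfolding maxchain_def by auto
  then show ?thesis using dim_maxchain[OF o x] by force
qed

definition emb :: "(nat \<Rightarrow> nat) \<Rightarrow> ogp \<Rightarrow> ogp \<Rightarrow> bool" where
  "emb j P Q \<longleftrightarrow> (\<forall>x\<in>El P. j x \<in> El Q) \<and> inj_on j (El P) \<and>
     (\<forall>x\<in>El P. \<forall>a. Fc Q a (j x) = j ` Fc P a x)"

lemma Fc_El: "ogpos P \<Longrightarrow> Fc P a x \<subseteq> El P" unfolding ogpos_def by auto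

lemma emb_cov:
  assumes e: "emb j P Q" and o: "ogpos P" and x: "x \<in> El P"
  shows "(w, j x) \<in> cov Q \<longleftrightarrow> (\<exists>y. (y,x) \<in> cov P \<and> w = j y)"
  using e x unfolding emb_def cov_def by auto

lemma emb_dim:
  assumes e: "emb j P Q" and o: "ogpos P" and oq: "ogpos Q"
  shows "x \<in> El P \<Longrightarrow> dim Q (j x) = dim P x"
proof (induction x rule: wf_induct_rule[OF wf_cov[OF o]])
  fix x assume IH: "\<And>y. (y,x) \<in> cov P \<Longrightarrow> y \<in> El P \<Longrightarrow> dim Q (j y) = dim P y"
    and x: "x \<in> El P"
  have jx: "j x \<in> El Q" using e x unfolding emb_def by auto
  show "dim Q (j x) = dim P x"
  proof (cases "\<exists>y. (y,x) \<in> cov P")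
    case True
    then obtain y where y: "(y,x) \<in> cov P" by blast
    have "(j y, j x) \<in> cov Q" using emb_cov[OF e o x] y by blast
    then have "dim Q (j x) = Suc (dim Q (j y))" using dim_cov[OF oq] by blast
    also have "\<dots> = Suc (dim P y)" using IH[OF y] cov_El[OF o y] by simp
    also have "\<dots> = dim P x" using dim_cov[OF o y] by simp
    finally show ?thesis .
  next
    case False
    then have "\<not>(\<exists>w. (w, j x) \<in> cov Q)" using emb_cov[OF e o x] by blast
    then show ?thesis using dim_zero[OF oq _ jx] dim_zero[OF o False x] by simp
  qed
qed

lemma emb_le:
  assumes e: "emb j P Q" and o: "ogpos P" and x: "x \<in> El P"
  shows "le Q w (j x) \<longleftrightarrow> (\<exists>y. le P y x \<and> w = j y)"
proof
  assume "le Q w (j x)"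
  then have "(w, j x) \<in> (cov Q)\<^sup>*" unfolding le_def by blast
  then show "\<exists>y. le P y x \<and> w = j y"
  proof (induction rule: converse_rtrancl_induct)
    case base then show ?case using le_refl[OF x] by blast
  next
    case (step w z)
    then obtain u where u: "le P u x" "z = j u" by blast
    have uE: "u \<in> El P" using le_El[OF o u(1)] .
    obtain v where "(v,u) \<in> cov P" "w = j v" using emb_cov[OF e o uE] step(1) u(2) by blast
    then show ?case using u le_trans cov_le by blast
  qed
next
  assume "\<exists>y. le P y x \<and> w = j y"
  then obtain y where y: "le P y x" "w = j y" by blast
  have "(y,x) \<in> (cov P)\<^sup>*" using y unfolding le_def by blast
  then have "(j y, j x) \<in> (cov Q)\<^sup>*"
  proof (induction rule: rtrancl_induct)
    case base then show ?case by simp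
  next
    case (step b c)
    have "(j b, j c) \<in> cov Q" using emb_cov[OF e o, of c "j b"] step(2) cov_El[OF o step(2)] by blast
    then show ?case using step(3) by simp
  qed
  moreover have "j x \<in> El Q" using e x unfolding emb_def by auto
  ultimately show "le Q w (j x)" using y unfolding le_def by simp
qed

lemma emb_cl:
  assumes e: "emb j P Q" and o: "ogpos P" and x: "x \<in> El P"
  shows "cl Q {j x} = j ` cl P {x}"
  using emb_le[OF e o x] unfolding cl_def by auto

lemma cl_El: "ogpos P \<Longrightarrow> cl P A \<subseteq> El P" unfolding cl_def using le_El by blast

lemma emb_nabla:
  assumes e: "emb j P Q" and o: "ogpos P" and C: "C \<subseteq> El P" and y: "y \<in> El P"
  shows "(nabla Q b (j y) \<inter> j ` C = {}) \<longleftrightarrow> (nabla P b y \<inter> C = {})"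
proof -
  have "j s \<in> nabla Q b (j y) \<longleftrightarrow> s \<in> nabla P b y" if s: "s \<in> C" for s
  proof -
    have sE: "s \<in> El P" using s C by auto
    have "j s \<in> nabla Q b (j y) \<longleftrightarrow> j y \<in> j ` Fc P b s"
      using e sE unfolding nabla_def emb_def by auto
    also have "\<dots> \<longleftrightarrow> y \<in> Fc P b s"
      using e y Fc_El[OF o] unfolding emb_def inj_on_def by blast
    finally show ?thesis using sE unfolding nabla_def by auto
  qed
  then show ?thesis by blast
qed

lemma emb_DeltaK:
  assumes e: "emb j P Q" and o: "ogpos P" and oq: "ogpos Q" and x: "x \<in> El P"
  shows "DeltaK Q a k (j x) = j ` DeltaK P a k x"
proof (cases "k < 0")
  case True then show ?thesis unfolding DeltaK_def by simp
next
  case False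
  have C: "cl P {x} \<subseteq> El P" using cl_El[OF o] .
  have "DeltaS Q a (nat k) (j ` cl P {x}) = j ` DeltaS P a (nat k) (cl P {x})"
  proof -
    have "z \<in> DeltaS Q a (nat k) (j ` cl P {x}) \<longleftrightarrow> z \<in> j ` DeltaS P a (nat k) (cl P {x})" for z
    proof
      assume "z \<in> DeltaS Q a (nat k) (j ` cl P {x})"
      then obtain y where y: "y \<in> cl P {x}" "z = j y" "dim Q z = nat k" "nabla Q (\<not>a) z \<inter> j ` cl P {x} = {}"
        unfolding DeltaS_def by auto
      have yE: "y \<in> El P" using y C by auto
      show "z \<in> j ` DeltaS P a (nat k) (cl P {x})"
        using y emb_dim[OF e o oq yE] emb_nabla[OF e o C yE] unfolding DeltaS_def by auto
    next
      assume "z \<in> j ` DeltaS P a (nat k) (cl P {x})"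
      then obtain y where y: "y \<in> cl P {x}" "z = j y" "dim P y = nat k" "nabla P (\<not>a) y \<inter> cl P {x} = {}"
        unfolding DeltaS_def by auto
      have yE: "y \<in> El P" using y C by auto
      show "z \<in> DeltaS Q a (nat k) (j ` cl P {x})"
        using y emb_dim[OF e o oq yE] emb_nabla[OF e o C yE] unfolding DeltaS_def by auto
    qed
    then show ?thesis by blast
  qed
  then show ?thesis using False emb_cl[OF e o x] unfolding DeltaK_def by simp
qed


lemma maxs_cl: assumes o: "ogpos P" and x: "x \<in> El P" shows "maxs P (cl P {x}) = {x}"
proof -
  have "y \<in> maxs P (cl P {x}) \<longleftrightarrow> y = x" for y
  proof
    assume "y \<in> maxs P (cl P {x})"
    then show "y = x" using le_refl[OF x] unfolding maxs_def cl_def by auto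
  next
    assume "y = x"
    moreover have "le P x z \<Longrightarrow> le P z x \<Longrightarrow> z = x" for z
      using le_dim[OF o] le_eqdim[OF o] by (metis antisym)
    ultimately show "y \<in> maxs P (cl P {x})" using le_refl[OF x] unfolding maxs_def cl_def by auto
  qed
  then show ?thesis by blast
qed

lemma nabla_self: assumes o: "ogpos P" shows "nabla P b x \<inter> cl P {x} = {}"
proof -
  have False if w: "w \<in> nabla P b x" "le P w x" for w
  proof -
    have "(x,w) \<in> cov P" using w unfolding nabla_def cov_def by auto
    then have "dim P w = Suc (dim P x)" using dim_cov[OF o] by blast
    then show False using le_dim[OF o w(2)] by simp
  qed
  then show ?thesis unfolding cl_def by blast
qed

lemma self_in_bd: assumes o: "ogpos P" and x: "x \<in> El P"
  shows "x \<in> bd P a (int m) (cl P {x}) \<longleftrightarrow> dim P x \<le> m"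
proof
  assume "x \<in> bd P a (int m) (cl P {x})"
  then show "dim P x \<le> m" using bd_top[OF o cl_El[OF o], of x a m] by fastforce
next
  assume d: "dim P x \<le> m"
  have xc: "x \<in> cl P {x}" using le_refl[OF x] unfolding cl_def by auto
  show "x \<in> bd P a (int m) (cl P {x})"
  proof (cases "dim P x = m")
    case True
    then have "x \<in> DeltaS P a m (cl P {x})" using xc nabla_self[OF o] unfolding DeltaS_def by auto
    then show ?thesis using le_refl[OF x] unfolding bd_def cl_def by auto
  next
    case False
    then have "x \<in> grade P (maxs P (cl P {x})) (dim P x)" using maxs_cl[OF o x] unfolding grade_def by auto
    then have "x \<in> cl P (grade P (maxs P (cl P {x})) (dim P x))" using le_refl[OF x] unfolding cl_def by auto
    then show ?thesis using d False unfolding bd_def by auto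
  qed
qed

lemma bd_sub: assumes o: "ogpos P" shows "bd P a (int m) (cl P {x}) \<subseteq> cl P {x}"
  unfolding bd_def cl_def DeltaS_def grade_def maxs_def using le_trans by auto

lemma ismap_dim:
  assumes o: "ogpos P" and oq: "ogpos Q" and f: "ismap f P Q" and i: "inj_on f (El P)" and y: "y \<in> El P"
  shows "dim Q (f y) = dim P y"
proof -
  have fy: "f y \<in> El Q" using f y unfolding ismap_def by auto
  have eq: "\<And>a m. f ` bd P a (int m) (cl P {y}) = bd Q a (int m) (cl Q {f y})"
    using f y unfolding ismap_def by auto
  have "y \<in> bd P True (int (dim P y)) (cl P {y})" using self_in_bd[OF o y] by simp
  then have "f y \<in> bd Q True (int (dim P y)) (cl Q {f y})" using eq by blast
  then have 1: "dim Q (f y) \<le> dim P y" using self_in_bd[OF oq fy] by blast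
  have "f y \<in> bd Q True (int (dim Q (f y))) (cl Q {f y})" using self_in_bd[OF oq fy] by simp
  then obtain z where z: "z \<in> bd P True (int (dim Q (f y))) (cl P {y})" "f z = f y" using eq by (metis imageE)
  have "z \<in> El P" using z(1) bd_sub[OF o] cl_El[OF o] by blast
  then have "z = y" using i y z(2) unfolding inj_on_def by blast
  then have "dim P y \<le> dim Q (f y)" using z(1) self_in_bd[OF o y] by blast
  then show ?thesis using 1 by simp
qed

lemma Fc_char:
  assumes o: "ogpos P" and x: "x \<in> El P" and d: "dim P x = Suc m"
  shows "{z \<in> bd P a (int m) (cl P {x}). dim P z = m} = Fc P a x"
proof -
  have "z \<in> bd P a (int m) (cl P {x}) \<and> dim P z = m \<longleftrightarrow> z \<in> Fc P a x" for z
  proof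
    assume z: "z \<in> bd P a (int m) (cl P {x}) \<and> dim P z = m"
    then have zD: "z \<in> DeltaS P a m (cl P {x})" using bd_top[OF o cl_El[OF o], of z a m] by auto
    then have "le P z x" unfolding DeltaS_def cl_def by auto
    then have "(z,x) \<in> cov P" using le_cover[OF o] z d by auto
    then obtain b where b: "z \<in> Fc P b x" unfolding cov_def by auto
    show "z \<in> Fc P a x"
    proof (cases "b = a")
      case True then show ?thesis using b by simp
    next
      case False
      then have "x \<in> nabla P (\<not>a) z" using b x unfolding nabla_def by (cases a; cases b) auto
      moreover have "x \<in> cl P {x}" using le_refl[OF x] unfolding cl_def by auto
      ultimately show ?thesis using zD unfolding DeltaS_def by auto
    qed
  next
    assume z: "z \<in> Fc P a x"
    have c: "(z,x) \<in> cov P" using z x unfolding cov_def by auto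
    have dz: "dim P z = m" using dim_cov[OF o c] d by simp
    have zc: "z \<in> cl P {x}" using cov_le[OF c] unfolding cl_def by auto
    have "nabla P (\<not>a) z \<inter> cl P {x} = {}"
    proof (rule ccontr)
      assume "nabla P (\<not>a) z \<inter> cl P {x} \<noteq> {}"
      then obtain w where w: "w \<in> El P" "z \<in> Fc P (\<not>a) w" "le P w x" unfolding nabla_def cl_def by auto
      have "(z,w) \<in> cov P" using w unfolding cov_def by auto
      then have "dim P w = dim P x" using dim_cov[OF o] dz d by simp
      then have "w = x" using le_eqdim[OF o w(3)] by simp
      then show False using w(2) z o unfolding ogpos_def by (cases a) auto
    qed
    then have "z \<in> DeltaS P a m (cl P {x})" using zc dz unfolding DeltaS_def by auto
    then have "z \<in> bd P a (int m) (cl P {x})" using le_refl[OF cl_El[OF o, THEN subsetD, OF zc]]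
      unfolding bd_def cl_def by auto
    then show "z \<in> bd P a (int m) (cl P {x}) \<and> dim P z = m" using dz by simp
  qed
  then show ?thesis by blast
qed

lemma Fc_zero: "ogpos P \<Longrightarrow> x \<in> El P \<Longrightarrow> dim P x = 0 \<Longrightarrow> Fc P a x = {}"
proof -
  assume o: "ogpos P" and x: "x \<in> El P" and d: "dim P x = 0"
  have "z \<notin> Fc P a x" for z
  proof
    assume "z \<in> Fc P a x"
    then have "(z,x) \<in> cov P" using x unfolding cov_def by auto
    then show False using dim_cov[OF o] d by simp
  qed
  then show ?thesis by blast
qed

lemma image_filter: "(\<forall>y\<in>B. g (f y) = h y) \<Longrightarrow> {z \<in> f ` B. g z = m} = f ` {z \<in> B. h z = m}"
  by auto

lemma ismap_emb:
  assumes o: "ogpos P" and oq: "ogpos Q" and f: "ismap f P Q" and i: "inj_on f (El P)"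
  shows "emb f P Q"
  unfolding emb_def
proof (intro conjI ballI allI)
  show "x \<in> El P \<Longrightarrow> f x \<in> El Q" for x using f unfolding ismap_def by auto
  show "inj_on f (El P)" by (rule i)
  fix x a assume x: "x \<in> El P"
  have fx: "f x \<in> El Q" using f x unfolding ismap_def by auto
  have dx: "dim Q (f x) = dim P x" using ismap_dim[OF o oq f i x] .
  show "Fc Q a (f x) = f ` Fc P a x"
  proof (cases "dim P x")
    case 0 then show ?thesis using Fc_zero[OF o x] Fc_zero[OF oq fx] dx by simp
  next
    case (Suc m)
    have eq: "f ` bd P a (int m) (cl P {x}) = bd Q a (int m) (cl Q {f x})"
      using f x unfolding ismap_def by auto
    have sub: "bd P a (int m) (cl P {x}) \<subseteq> El P" using bd_sub[OF o] cl_El[OF o] by blast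
    have "Fc Q a (f x) = {z \<in> bd Q a (int m) (cl Q {f x}). dim Q z = m}"
      using Fc_char[OF oq fx] dx Suc by simp
    also have "\<dots> = {z \<in> f ` bd P a (int m) (cl P {x}). dim Q z = m}"
      using eq by simp
    also have "\<dots> = f ` {z \<in> bd P a (int m) (cl P {x}). dim P z = m}"
    proof -
      have "\<And>y. y \<in> bd P a (int m) (cl P {x}) \<Longrightarrow> dim Q (f y) = dim P y"
        using sub ismap_dim[OF o oq f i] by blast
      then show ?thesis using image_filter[of "bd P a (int m) (cl P {x})" "dim Q" f "dim P" m] by blast
    qed
    also have "\<dots> = f ` Fc P a x" using Fc_char[OF o x Suc] by simp
    finally show ?thesis .
  qed
qed



lemma regmol_ogpos: "regmol P \<Longrightarrow> ogpos P"
  by (induction rule: regmol.induct) auto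

lemma emb_El: "emb j P Q \<Longrightarrow> x \<in> El P \<Longrightarrow> j x \<in> El Q" unfolding emb_def by blast
lemma emb_inj: "emb j P Q \<Longrightarrow> inj_on j (El P)" unfolding emb_def by blast
lemma emb_Fc: "emb j P Q \<Longrightarrow> x \<in> El P \<Longrightarrow> Fc Q a (j x) = j ` Fc P a x" unfolding emb_def by blast
lemma embI: "(\<And>x. x \<in> El P \<Longrightarrow> j x \<in> El Q) \<Longrightarrow> inj_on j (El P) \<Longrightarrow>
   (\<And>x a. x \<in> El P \<Longrightarrow> Fc Q a (j x) = j ` Fc P a x) \<Longrightarrow> emb j P Q" unfolding emb_def by blast

lemma emb_comp: assumes f: "emb f A B" and g: "emb g B C" shows "emb (g \<circ> f) A C"
proof (rule embI)
  have fE: "f ` El A \<subseteq> El B" using emb_El[OF f] by blast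
  show "x \<in> El A \<Longrightarrow> (g \<circ> f) x \<in> El C" for x using emb_El[OF g emb_El[OF f]] by simp
  have "inj_on g (f ` El A)" using emb_inj[OF g] fE inj_on_subset by blast
  then show "inj_on (g \<circ> f) (El A)" using emb_inj[OF f] comp_inj_on by blast
  fix x a assume x: "x \<in> El A"
  have 1: "Fc C a (g (f x)) = g ` Fc B a (f x)" using emb_Fc[OF g emb_El[OF f x]] .
  have 2: "Fc B a (f x) = f ` Fc A a x" using emb_Fc[OF f x] .
  show "Fc C a ((g \<circ> f) x) = (g \<circ> f) ` Fc A a x" unfolding o_def 1 2 by (simp add: image_image)
qed
lemma emb_cong2: assumes e: "emb f A B" and fg: "\<forall>x\<in>El A. f x = g x" and o: "ogpos A" shows "emb g A B"
proof (rule embI)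
  show "x \<in> El A \<Longrightarrow> g x \<in> El B" for x using emb_El[OF e] fg by metis
  show "inj_on g (El A)" using emb_inj[OF e] fg inj_on_cong by metis
  fix x a assume x: "x \<in> El A"
  have "g ` Fc A a x = f ` Fc A a x" proof (rule image_cong[OF refl])
    fix y assume "y \<in> Fc A a x"
    then have "y \<in> El A" using Fc_El[OF o] by blast
    then show "g y = f y" using fg by simp
  qed
  then show "Fc B a (g x) = g ` Fc A a x" using emb_Fc[OF e x] fg x by metis
qed

lemma paste_embs:
  assumes "is_paste U V k W iU iV"
  shows "emb iU U W" "emb iV V W"
proof -
  have p1: "inj_on iU (El U)" using assms unfolding is_paste_def by (elim exE conjE) assumption
  have p2: "inj_on iV (El V)" using assms unfolding is_paste_def by (elim exE conjE) assumption
  have p3: "El W = iU ` El U \<union> iV ` El V" using assms unfolding is_paste_def by (elim exE conjE) assumption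
  have p4: "\<forall>x\<in>El U. \<forall>a. Fc W a (iU x) = iU ` Fc U a x" using assms unfolding is_paste_def by (elim exE conjE) assumption
  have p5: "\<forall>y\<in>El V. \<forall>a. Fc W a (iV y) = iV ` Fc V a y" using assms unfolding is_paste_def by (elim exE conjE) assumption
  note p = p1 p2 p3 p4 p5
  show "emb iU U W"
  proof (rule embI)
    show "x \<in> El U \<Longrightarrow> iU x \<in> El W" for x using p(3) by blast
    show "inj_on iU (El U)" by (rule p(1))
    show "x \<in> El U \<Longrightarrow> Fc W a (iU x) = iU ` Fc U a x" for x a using p(4) by blast
  qed
  show "emb iV V W"
  proof (rule embI)
    show "x \<in> El V \<Longrightarrow> iV x \<in> El W" for x using p(3) by blast
    show "inj_on iV (El V)" by (rule p(2))
    show "x \<in> El V \<Longrightarrow> Fc W a (iV x) = iV ` Fc V a x" for x a using p(5) by blast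
  qed
qed

lemma subinc_emb: "subinc f A B \<Longrightarrow> ogpos A \<and> ogpos B \<and> emb f A B"
proof (induction rule: subinc.induct)
  case (iso U V f)
  have o: "ogpos U" "ogpos V" using iso(1,2) regmol_ogpos by auto
  have m: "ismap f U V" and b: "bij_betw f (El U) (El V)" using iso(3) unfolding iso_def by simp_all
  show ?case using o ismap_emb[OF o m bij_betw_imp_inj_on[OF b]] by simp
next
  case (inl U V k W iU iV)
  then show ?case using regmol_ogpos[OF inl(1)] paste_embs(1)[OF inl(6)] by simp
next
  case (inr U V k W iU iV)
  then show ?case using regmol_ogpos[OF inr(2)] paste_embs(2)[OF inr(6)] by simp
next
  case (comp f A B g C)
  then show ?case using emb_comp[of f A B g C] by (simp add: comp_def)
next
  case (ext f A B g)
  then show ?case using emb_cong2[of f A B g] by simp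
qed

lemma path_fwd:
  assumes p: "fpath U k xs" and h: "hd xs \<in> S" and c: "\<And>u v. fedge U k u v \<Longrightarrow> u \<in> S \<Longrightarrow> v \<in> S"
  shows "set xs \<subseteq> S"
proof -
  have "i < length xs \<Longrightarrow> xs ! i \<in> S" for i
  proof (induction i)
    case 0 then show ?case using h p unfolding fpath_def by (simp add: hd_conv_nth)
  next
    case (Suc i) then show ?case using c p unfolding fpath_def by auto
  qed
  then show ?thesis by (auto simp: in_set_conv_nth)
qed

lemma path_bwd:
  assumes p: "fpath U k xs" and h: "last xs \<in> S" and c: "\<And>u v. fedge U k u v \<Longrightarrow> v \<in> S \<Longrightarrow> u \<in> S"
  shows "set xs \<subseteq> S"
proof -
  have ne: "xs \<noteq> []" using p unfolding fpath_def by auto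
  have "d < length xs \<Longrightarrow> xs ! (length xs - 1 - d) \<in> S" for d
  proof (induction d)
    case 0 then show ?case using h ne by (simp add: last_conv_nth)
  next
    case (Suc d)
    then have "fedge U k (xs ! (length xs - 1 - Suc d)) (xs ! Suc (length xs - 1 - Suc d))"
      using p unfolding fpath_def by auto
    moreover have "Suc (length xs - 1 - Suc d) = length xs - 1 - d" using Suc by auto
    ultimately show ?case using c Suc by auto
  qed
  then have "i < length xs \<Longrightarrow> xs ! i \<in> S" for i
  proof -
    fix i assume i: "i < length xs"
    then have "length xs - 1 - (length xs - 1 - i) = i" by simp
    moreover have "length xs - 1 - i < length xs" using i by simp
    ultimately show "xs ! i \<in> S" using \<open>\<And>d. d < length xs \<Longrightarrow> xs ! (length xs - 1 - d) \<in> S\<close> by metis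
  qed
  then show ?thesis by (auto simp: in_set_conv_nth)
qed

lemma emb_fvert: "emb f A B \<Longrightarrow> ogpos A \<Longrightarrow> ogpos B \<Longrightarrow> f ` fvert A k \<subseteq> fvert B k"
proof -
  assume e: "emb f A B" and o: "ogpos A" and oq: "ogpos B"
  show ?thesis unfolding fvert_def using emb_dim[OF e o oq] emb_El[OF e] by force
qed

lemma DeltaK_El: "ogpos P \<Longrightarrow> DeltaK P a k x \<subseteq> El P"
proof -
  assume o: "ogpos P"
  show ?thesis unfolding DeltaK_def DeltaS_def using cl_El[OF o, of "{x}"] by auto
qed

lemma DeltaK_nonneg: "DeltaK P a k x \<noteq> {} \<Longrightarrow> k \<ge> 0"
  unfolding DeltaK_def by (auto split: if_splits)

lemma dimS_eq: "ogpos P \<Longrightarrow> x \<in> El P \<Longrightarrow> dim P x = n \<Longrightarrow> (\<forall>y\<in>El P. dim P y \<le> n) \<Longrightarrow> dimS P (El P) = int n"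
  unfolding dimS_def ogpos_def by (auto intro!: Max_eqI)


lemma paste_ident:
  assumes "is_paste U V k W iU iV" and "x \<in> El U" and "y \<in> El V" and "iU x = iV y"
  shows "x \<in> bd U True (int k) (El U) \<and> y \<in> bd V False (int k) (El V)"
proof -
  obtain \<phi> where ph: "iso \<phi> (sub U (bd U True (int k) (El U))) (sub V (bd V False (int k) (El V)))"
    and id: "\<forall>x\<in>El U. \<forall>y\<in>El V. iU x = iV y \<longleftrightarrow> (x \<in> bd U True (int k) (El U) \<and> y = \<phi> x)"
    using assms(1) unfolding is_paste_def by (elim exE conjE) (rule that)
  have b: "bij_betw \<phi> (bd U True (int k) (El U)) (bd V False (int k) (El V))"
    using ph unfolding iso_def sub_def by simp
  have "x \<in> bd U True (int k) (El U)" "y = \<phi> x" using id assms(2,3,4) by auto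
  then show ?thesis using b bij_betwE by blast
qed

lemma dim_top: "ogpos P \<Longrightarrow> dimS P (El P) = int n \<Longrightarrow> x \<in> fvert P (int n - 1) \<Longrightarrow> dim P x = n"
  using dimS_le unfolding fvert_def by fastforce

lemma main_inl:
  assumes reg: "regmol U" and regV: "regmol V" and oW: "ogpos W" and kU: "int k < dimS U (El U)"
    and p: "is_paste U V k W iU iV"
    and dU: "dimS U (El U) = int n" and dW: "dimS W (El W) = int n"
  shows "path_induced W (int n - 1) (iU ` fvert U (int n - 1))"
proof -
  let ?K = "int n - 1"
  let ?S = "iU ` fvert U ?K"
  have oU: "ogpos U" using regmol_ogpos[OF reg] .
  have eU: "emb iU U W" and eV: "emb iV V W" using paste_embs[OF p] by auto
  have pEl: "El W = iU ` El U \<union> iV ` El V" using p unfolding is_paste_def by (elim exE conjE) assumption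
  have oV: "ogpos V" using regmol_ogpos[OF regV] .
  have Ssub: "?S \<subseteq> fvert W ?K" using emb_fvert[OF eU oU oW] .
  have closed: "u \<in> ?S" if e: "fedge W ?K u v" and v: "v \<in> ?S" for u v
  proof (rule ccontr)
    assume nu: "u \<notin> ?S"
    have uf: "u \<in> fvert W ?K" using e unfolding fedge_def by blast
    have "u \<notin> iU ` El U"
    proof
      assume "u \<in> iU ` El U"
      then obtain x0 where "x0 \<in> El U" "u = iU x0" by blast
      then show False using nu uf emb_dim[OF eU oU oW] unfolding fvert_def by auto
    qed
    then obtain y where y: "y \<in> El V" "u = iV y" using uf pEl unfolding fvert_def by auto
    obtain x where x: "x \<in> fvert U ?K" "v = iU x" using v by blast
    have xE: "x \<in> El U" using x unfolding fvert_def by auto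
    have dx: "dim U x = n" using dim_top[OF oU dU x(1)] .
    obtain z where z: "z \<in> DeltaK W True ?K u" "z \<in> DeltaK W False ?K v" using e unfolding fedge_def by blast
    have K0: "?K \<ge> 0" using DeltaK_nonneg z(1) by blast
    then have nK: "nat ?K = n - 1" "n \<ge> 1" by auto
    obtain y' where y': "y' \<in> DeltaK V True ?K y" "z = iV y'" using z(1) emb_DeltaK[OF eV oV oW y(1)] y(2) by auto
    obtain x' where x': "x' \<in> DeltaK U False ?K x" "z = iU x'" using z(2) emb_DeltaK[OF eU oU oW xE] x(2) by auto
    have y'E: "y' \<in> El V" using y'(1) DeltaK_El[OF oV] by blast
    have x'E: "x' \<in> El U" using x'(1) DeltaK_El[OF oU] by blast
    have x'D: "x' \<in> cl U {x}" "dim U x' = n - 1" "nabla U True x' \<inter> cl U {x} = {}"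
      using x'(1) K0 nK unfolding DeltaK_def DeltaS_def by auto
    have bdx: "x' \<in> bd U True (int k) (El U)" using paste_ident[OF p x'E y'E] x'(2) y'(2) by simp
    have "k \<le> n - 1" using kU dU by simp
    then have "x' \<in> DeltaS U True k (El U)" using bd_top[OF oU _ bdx] x'D(2) by auto
    then have nF: "nabla U False x' \<inter> El U = {}" unfolding DeltaS_def by auto
    have "le U x' x" using x'D(1) unfolding cl_def by auto
    then have "(x', x) \<in> cov U" using le_cover[OF oU] x'D(2) dx nK by auto
    then obtain b where b: "x' \<in> Fc U b x" unfolding cov_def by auto
    have xc: "x \<in> cl U {x}" using le_refl[OF xE] unfolding cl_def by auto
    show False
    proof (cases b)
      case True then show False using b xE xc x'D(3) unfolding nabla_def by auto
    next
      case False then show False using b xE nF unfolding nabla_def by auto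
    qed
  qed
  show ?thesis unfolding path_induced_def
  proof (intro conjI allI impI)
    show "?S \<subseteq> fvert W ?K" by (rule Ssub)
    fix xs assume "fpath W ?K xs" "hd xs \<in> ?S" "last xs \<in> ?S"
    then show "set xs \<subseteq> ?S" using path_bwd closed by metis
  qed
qed


lemma main_inr:
  assumes regU: "regmol U" and reg: "regmol V" and oW: "ogpos W" and kV: "int k < dimS V (El V)"
    and p: "is_paste U V k W iU iV"
    and dV: "dimS V (El V) = int n" and dW: "dimS W (El W) = int n"
  shows "path_induced W (int n - 1) (iV ` fvert V (int n - 1))"
proof -
  let ?K = "int n - 1"
  let ?S = "iV ` fvert V ?K"
  have oU: "ogpos U" using regmol_ogpos[OF regU] .
  have oV: "ogpos V" using regmol_ogpos[OF reg] .
  have eU: "emb iU U W" and eV: "emb iV V W" using paste_embs[OF p] by auto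
  have pEl: "El W = iU ` El U \<union> iV ` El V" using p unfolding is_paste_def by (elim exE conjE) assumption
  have Ssub: "?S \<subseteq> fvert W ?K" using emb_fvert[OF eV oV oW] .
  have closed: "v \<in> ?S" if e: "fedge W ?K u v" and u: "u \<in> ?S" for u v
  proof (rule ccontr)
    assume nv: "v \<notin> ?S"
    have vf: "v \<in> fvert W ?K" using e unfolding fedge_def by blast
    have "v \<notin> iV ` El V"
    proof
      assume "v \<in> iV ` El V"
      then obtain y0 where "y0 \<in> El V" "v = iV y0" by blast
      then show False using nv vf emb_dim[OF eV oV oW] unfolding fvert_def by auto
    qed
    then obtain x where x: "x \<in> El U" "v = iU x" using vf pEl unfolding fvert_def by auto
    obtain y where y: "y \<in> fvert V ?K" "u = iV y" using u by blast
    have yE: "y \<in> El V" using y unfolding fvert_def by auto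
    have dy: "dim V y = n" using dim_top[OF oV dV y(1)] .
    obtain z where z: "z \<in> DeltaK W True ?K u" "z \<in> DeltaK W False ?K v" using e unfolding fedge_def by blast
    have K0: "?K \<ge> 0" using DeltaK_nonneg z(1) by blast
    then have nK: "nat ?K = n - 1" "n \<ge> 1" by auto
    obtain y' where y': "y' \<in> DeltaK V True ?K y" "z = iV y'" using z(1) emb_DeltaK[OF eV oV oW yE] y(2) by auto
    obtain x' where x': "x' \<in> DeltaK U False ?K x" "z = iU x'" using z(2) emb_DeltaK[OF eU oU oW x(1)] x(2) by auto
    have y'E: "y' \<in> El V" using y'(1) DeltaK_El[OF oV] by blast
    have x'E: "x' \<in> El U" using x'(1) DeltaK_El[OF oU] by blast
    have y'D: "y' \<in> cl V {y}" "dim V y' = n - 1" "nabla V False y' \<inter> cl V {y} = {}"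
      using y'(1) K0 nK unfolding DeltaK_def DeltaS_def by auto
    have bdy: "y' \<in> bd V False (int k) (El V)" using paste_ident[OF p x'E y'E] x'(2) y'(2) by simp
    have "k \<le> n - 1" using kV dV by simp
    then have "y' \<in> DeltaS V False k (El V)" using bd_top[OF oV _ bdy] y'D(2) by auto
    then have nT: "nabla V True y' \<inter> El V = {}" unfolding DeltaS_def by auto
    have "le V y' y" using y'D(1) unfolding cl_def by auto
    then have "(y', y) \<in> cov V" using le_cover[OF oV] y'D(2) dy nK by auto
    then obtain b where b: "y' \<in> Fc V b y" unfolding cov_def by auto
    have yc: "y \<in> cl V {y}" using le_refl[OF yE] unfolding cl_def by auto
    show False
    proof (cases b)
      case True then show False using b yE nT unfolding nabla_def by auto
    next
      case False then show False using b yE yc y'D(3) unfolding nabla_def by auto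
    qed
  qed
  show ?thesis unfolding path_induced_def
  proof (intro conjI allI impI)
    show "?S \<subseteq> fvert W ?K" by (rule Ssub)
    fix xs assume "fpath W ?K xs" "hd xs \<in> ?S" "last xs \<in> ?S"
    then show "set xs \<subseteq> ?S" using path_fwd closed by metis
  qed
qed

lemma main_comp:
  assumes eF: "emb f A B" and eG: "emb g B C" and oA: "ogpos A" and oB: "ogpos B" and oC: "ogpos C"
    and IHf: "path_induced B (int n - 1) (f ` fvert A (int n - 1))"
    and IHg: "path_induced C (int n - 1) (g ` fvert B (int n - 1))"
  shows "path_induced C (int n - 1) ((g \<circ> f) ` fvert A (int n - 1))"
proof -
  let ?K = "int n - 1"
  have s1: "f ` fvert A ?K \<subseteq> fvert B ?K" using emb_fvert[OF eF oA oB] .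
  have s2: "g ` fvert B ?K \<subseteq> fvert C ?K" using emb_fvert[OF eG oB oC] .
  have fvB: "fvert B ?K \<subseteq> El B" unfolding fvert_def by auto
  have ig: "inj_on g (El B)" using emb_inj[OF eG] .
  have gf: "(g \<circ> f) ` fvert A ?K = g ` f ` fvert A ?K" by (rule image_comp[symmetric])
  show ?thesis unfolding path_induced_def gf
  proof (intro conjI allI impI)
    show "g ` f ` fvert A ?K \<subseteq> fvert C ?K" using s1 s2 by blast
    fix xs assume p: "fpath C ?K xs" and h: "hd xs \<in> g ` f ` fvert A ?K" and l: "last xs \<in> g ` f ` fvert A ?K"
    have ne: "xs \<noteq> []" using p unfolding fpath_def by auto
    have hB: "hd xs \<in> g ` fvert B ?K" using h s1 by blast
    have lB: "last xs \<in> g ` fvert B ?K" using l s1 by blast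
    have sx: "set xs \<subseteq> g ` fvert B ?K" using IHg p hB lB unfolding path_induced_def by blast
    define h' where "h' = inv_into (El B) g"
    have hinv: "h' (g b) = b" if "b \<in> El B" for b using inv_into_f_f[OF ig that] h'_def by simp
    define ys where "ys = map h' xs"
    have xs_eq: "xs = map g ys"
    proof -
      have "g (h' x) = x" if xin: "x \<in> set xs" for x
      proof -
        obtain b where b: "b \<in> fvert B ?K" "x = g b" using sx xin by blast
        have "b \<in> El B" using b(1) fvB by blast
        then show ?thesis using hinv b(2) by simp
      qed
      then show ?thesis unfolding ys_def by (simp add: map_idI)
    qed
    have sy: "set ys \<subseteq> fvert B ?K"
    proof
      fix y assume "y \<in> set ys"
      then obtain x where x: "x \<in> set xs" "y = h' x" unfolding ys_def by auto
      obtain b where b: "b \<in> fvert B ?K" "x = g b" using sx x(1) by blast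
      have "b \<in> El B" using b(1) fvB by blast
      then show "y \<in> fvert B ?K" using hinv b x(2) by simp
    qed
    have len: "length ys = length xs" unfolding ys_def by simp
    have py: "fpath B ?K ys" unfolding fpath_def
    proof (intro conjI allI impI)
      show "ys \<noteq> []" using ne len by auto
      show "set ys \<subseteq> fvert B ?K" by (rule sy)
      fix i assume i: "Suc i < length ys"
      have i0: "i < length ys" using i by simp
      have a1: "ys ! i \<in> fvert B ?K" using nth_mem[OF i0] sy by blast
      have a2: "ys ! Suc i \<in> fvert B ?K" using nth_mem[OF i] sy by blast
      have a: "ys ! i \<in> El B" "ys ! Suc i \<in> El B" using a1 a2 fvB by blast+
      have pe: "\<forall>j. Suc j < length xs \<longrightarrow> fedge C ?K (xs ! j) (xs ! Suc j)" using p unfolding fpath_def by blast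
      have "fedge C ?K (xs ! i) (xs ! Suc i)" using pe i len by simp
      moreover have "xs ! i = g (ys ! i)" "xs ! Suc i = g (ys ! Suc i)" using xs_eq i0 i by (metis nth_map)+
      ultimately have "DeltaK C True ?K (g (ys ! i)) \<inter> DeltaK C False ?K (g (ys ! Suc i)) \<noteq> {}"
        unfolding fedge_def by simp
      then have "g ` DeltaK B True ?K (ys ! i) \<inter> g ` DeltaK B False ?K (ys ! Suc i) \<noteq> {}"
        using emb_DeltaK[OF eG oB oC a(1)] emb_DeltaK[OF eG oB oC a(2)] by simp
      moreover have "g ` (DeltaK B True ?K (ys ! i) \<inter> DeltaK B False ?K (ys ! Suc i)) =
          g ` DeltaK B True ?K (ys ! i) \<inter> g ` DeltaK B False ?K (ys ! Suc i)"
        using inj_on_image_Int[OF ig DeltaK_El[OF oB] DeltaK_El[OF oB]] .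
      ultimately have "DeltaK B True ?K (ys ! i) \<inter> DeltaK B False ?K (ys ! Suc i) \<noteq> {}"
        by auto
      then show "fedge B ?K (ys ! i) (ys ! Suc i)" unfolding fedge_def using a1 a2 by blast
    qed
    have hy: "hd ys \<in> f ` fvert A ?K"
    proof -
      obtain a where a: "a \<in> fvert A ?K" "hd xs = g (f a)" using h by blast
      have "f a \<in> El B" using a s1 fvB by auto
      then have "hd ys = f a" unfolding ys_def using ne a hinv by (simp add: hd_map)
      then show ?thesis using a by auto
    qed
    have ly: "last ys \<in> f ` fvert A ?K"
    proof -
      obtain a where a: "a \<in> fvert A ?K" "last xs = g (f a)" using l by blast
      have "f a \<in> El B" using a s1 fvB by auto
      then have "last ys = f a" unfolding ys_def using ne a hinv by (simp add: last_map)
      then show ?thesis using a by auto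
    qed
    have "set ys \<subseteq> f ` fvert A ?K" using IHf py hy ly unfolding path_induced_def by blast
    then show "set xs \<subseteq> g ` f ` fvert A ?K" using xs_eq by (metis image_mono set_map)
  qed
qed


lemma dim_mid:
  assumes eF: "emb f A B" and eG: "emb g B C" and oA: "ogpos A" and oB: "ogpos B" and oC: "ogpos C"
    and dA: "dimS A (El A) = int n" and dC: "dimS C (El C) = int n"
  shows "dimS B (El B) = int n"
proof -
  obtain x where x: "x \<in> El A" "dim A x = n" using dimS_ex[OF oA dA] by blast
  have fx1: "f x \<in> El B" using emb_El[OF eF x(1)] .
  have fx2: "dim B (f x) = n" using emb_dim[OF eF oA oB x(1)] x(2) by simp
  have "\<forall>y\<in>El B. dim B y \<le> n"
  proof
    fix y assume y: "y \<in> El B"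
    have "dim C (g y) \<le> n" using dimS_le[OF oC dC emb_El[OF eG y]] .
    moreover have "dim C (g y) = dim B y" by (rule emb_dim[OF eG oB oC y])
    ultimately show "dim B y \<le> n" by simp
  qed
  then show ?thesis by (rule dimS_eq[OF oB fx1 fx2])
qed

lemma main_all: "subinc f A B \<Longrightarrow> dimS A (El A) = int n \<Longrightarrow> dimS B (El B) = int n \<Longrightarrow>
   path_induced B (int n - 1) (f ` fvert A (int n - 1))"
proof (induction arbitrary: n rule: subinc.induct)
  case (iso U V f)
  have o: "ogpos U" "ogpos V" using iso(1,2) regmol_ogpos by auto
  have m: "ismap f U V" and b: "bij_betw f (El U) (El V)" using iso(3) unfolding iso_def by simp_all
  have e: "emb f U V" using ismap_emb[OF o m bij_betw_imp_inj_on[OF b]] .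
  have s: "f ` fvert U (int n - 1) \<subseteq> fvert V (int n - 1)" using emb_fvert[OF e o] .
  have "fvert V (int n - 1) \<subseteq> f ` fvert U (int n - 1)"
  proof
    fix y assume y: "y \<in> fvert V (int n - 1)"
    then obtain x where x: "x \<in> El U" "y = f x" using b unfolding fvert_def bij_betw_def by auto
    then show "y \<in> f ` fvert U (int n - 1)" using y emb_dim[OF e o x(1)] unfolding fvert_def by auto
  qed
  then show ?case using s unfolding path_induced_def fpath_def by auto
next
  case (inl U V k W iU iV)
  show ?case by (rule main_inl[OF inl(1) inl(2) inl(5) inl(3) inl(6) inl(7) inl(8)])
next
  case (inr U V k W iU iV)
  show ?case by (rule main_inr[OF inr(1) inr(2) inr(5) inr(4) inr(6) inr(7) inr(8)])
next
  case (comp f A B g C)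
  have a: "ogpos A" "ogpos B" "emb f A B" using subinc_emb[OF comp(1)] by auto
  have b: "ogpos C" "emb g B C" using subinc_emb[OF comp(2)] by auto
  have dB: "dimS B (El B) = int n" using dim_mid[OF a(3) b(2) a(1,2) b(1) comp(5,6)] .
  show ?case using main_comp[OF a(3) b(2) a(1,2) b(1) comp(3)[OF comp(5) dB] comp(4)[OF dB comp(6)]] .
next
  case (ext f A B g)
  have "f ` fvert A (int n - 1) = g ` fvert A (int n - 1)" using ext(2) unfolding fvert_def by auto
  then show ?case using ext by simp
qed

theorem proposition3p22:
  fixes U V :: ogp and i :: "nat \<Rightarrow> nat" and n :: nat
  assumes "regmol U" and "regmol V" and "incl i V U"
    and "dimS U (El U) = int n" and "dimS V (El V) = int n"
    and "round V"
    and "subinc i V U"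
  shows "path_induced U (int n - 1) (i ` fvert V (int n - 1))"
  using main_all[OF assms(7) assms(5) assms(4)] .

end
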